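(* Let $A,\beta,\xi_0,\theta>0$ and $0<\alpha<\frac12$. Let $v_{n,m}\colon(0,\xi_0]\to[0,\infty)$, for integers $n,m\ge0$, and let $w\colon(0,\xi_0]\to[0,\infty)$ be bounded. Suppose that for all $n,m,k\ge0$ and $\xi\in(0,\xi_0]$: (1) $v_{n+1,m}(\xi)\le v_{n,m}(\xi)$; (2) $v_{n+k,m}(\xi)\le4(1-A\xi^2)^kv_{n,m}(\xi)$; (3) $v_{0,m}(\xi)\le\theta^{-m}w(\xi)$. Then for any $c>0$ the sequence $t_n=\sup\{v_{n,m}(\xi):\ n^{-\alpha}<\xi\le\xi_0,\ m\in\mathbb Z_{\ge0},\ m<c\log n\}$ decays rapidly in $n$.
   Context: A sequence $\{t_n\}$ decays rapidly in $n$ if for each $\ell\ge1$ there is $C$ with $|t_n|\le Cn^{-\ell}$ for all $n\ge1$ (a supremum over the empty set is taken to be $0$). *)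

theory Defs
  imports Complex_Main
begin

definition sup0 :: "real set \<Rightarrow> real" where
  "sup0 S = (if S = {} then 0 else Sup S)"

definition decays_rapidly :: "(nat \<Rightarrow> real) \<Rightarrow> bool" where
  "decays_rapidly t \<longleftrightarrow>
     (\<forall>l::nat. l \<ge> 1 \<longrightarrow> (\<exists>C::real. \<forall>n::nat. n \<ge> 1 \<longrightarrow> \<bar>t n\<bar> \<le> C * real n powr (- real l)))"

end

theory Submission
  imports Defs
begin

lemma exp_ge_pow_fact:
  fixes x :: real assumes "x \<ge> 0"
  shows "x ^ N / fact N \<le> exp x"
proof -
  have s: "summable (\<lambda>n. x^n /\<^sub>R fact n)"
    using exp_converges[of x] sums_summable by blast
  have "sum (\<lambda>n. x^n /\<^sub>R fact n) {N} \<le> suminf (\<lambda>n. x^n /\<^sub>R fact n)"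
    by (rule sum_le_suminf[OF s]) (use assms in auto)
  moreover have "suminf (\<lambda>n. x^n /\<^sub>R fact n) = exp x"
    using exp_converges[of x] sums_unique by metis
  ultimately show ?thesis by (simp add: divide_inverse mult.commute)
qed

theorem proposition7p6:
  fixes A \<beta> \<xi>0 \<theta> \<alpha> c :: real
    and v :: "nat \<Rightarrow> nat \<Rightarrow> real \<Rightarrow> real"
    and w :: "real \<Rightarrow> real"
  assumes "A > 0" "\<beta> > 0" "\<xi>0 > 0" "\<theta> > 0"
    and "0 < \<alpha>" "\<alpha> < 1/2"
    and v_nonneg: "\<And>n m \<xi>. \<xi> \<in> {0<..\<xi>0} \<Longrightarrow> v n m \<xi> \<ge> 0"
    and w_nonneg: "\<And>\<xi>. \<xi> \<in> {0<..\<xi>0} \<Longrightarrow> w \<xi> \<ge> 0"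
    and w_bdd: "\<exists>B. \<forall>\<xi>\<in>{0<..\<xi>0}. w \<xi> \<le> B"
    and h1: "\<And>n m \<xi>. \<xi> \<in> {0<..\<xi>0} \<Longrightarrow> v (n + 1) m \<xi> \<le> v n m \<xi>"
    and h2: "\<And>n m k \<xi>. \<xi> \<in> {0<..\<xi>0} \<Longrightarrow>
               v (n + k) m \<xi> \<le> 4 * (1 - A * \<xi>^2) ^ k * v n m \<xi>"
    and h3: "\<And>m \<xi>. \<xi> \<in> {0<..\<xi>0} \<Longrightarrow> v 0 m \<xi> \<le> \<theta> powr (- real m) * w \<xi>"
    and "c > 0"
  shows "decays_rapidly (\<lambda>n. sup0 {v n m \<xi> | m \<xi>.
            real n powr (- \<alpha>) < \<xi> \<and> \<xi> \<le> \<xi>0 \<and> real m < c * ln (real n)})"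
proof -
  obtain B where B: "\<forall>\<xi>\<in>{0<..\<xi>0}. w \<xi> \<le> B" using w_bdd by blast
  define B' where "B' = max B 0"
  define p where "p = c * \<bar>ln \<theta>\<bar>"
  define a where "a = 1 - 2 * \<alpha>"
  have a_pos: "a > 0" using assms unfolding a_def by simp
  have B'_nn: "B' \<ge> 0" unfolding B'_def by simp
  have key: "v n m \<xi> \<le> 4 * B' * exp (- A * real n powr a) * real n powr p"
    if n1: "n \<ge> 1" and hx: "real n powr (-\<alpha>) < \<xi>" "\<xi> \<le> \<xi>0" and hm: "real m < c * ln (real n)"
    for n m \<xi>
  proof -
    have npos: "real n > 0" using n1 by simp
    have "0 < real n powr (-\<alpha>)" using npos by simp
    then have xpos: "\<xi> > 0" using hx(1) by linarith
    have hxi: "\<xi> \<in> {0<..\<xi>0}" using xpos hx by simp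
    have th: "\<theta> powr (- real m) \<le> real n powr p"
    proof -
      have "- real m * ln \<theta> \<le> real m * \<bar>ln \<theta>\<bar>"
        by (metis abs_ge_minus_self abs_mult abs_of_nat mult_minus_left)
      also have "\<dots> \<le> c * ln (real n) * \<bar>ln \<theta>\<bar>"
        using hm by (intro mult_right_mono) auto
      also have "\<dots> = p * ln (real n)" unfolding p_def by simp
      finally have "exp (- real m * ln \<theta>) \<le> exp (p * ln (real n))" by simp
      then show ?thesis using npos assms(4) by (simp add: powr_def)
    qed
    have wB: "w \<xi> \<le> B'" using B hxi unfolding B'_def by fastforce
    have v0: "v 0 m \<xi> \<le> real n powr p * B'"
    proof -
      have "\<theta> powr (- real m) * w \<xi> \<le> real n powr p * B'"
        using th wB w_nonneg[OF hxi] by (intro mult_mono) auto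
      then show ?thesis using h3[OF hxi, of m] by linarith
    qed
    have rhs_nn: "0 \<le> 4 * B' * exp (- A * real n powr a) * real n powr p"
      using B'_nn by simp
    show ?thesis
    proof (cases "A * \<xi>^2 \<le> 1")
      case True
      have 1: "v n m \<xi> \<le> 4 * (1 - A * \<xi>^2) ^ n * v 0 m \<xi>"
        using h2[OF hxi, where n=0 and m=m and k=n] by simp
      have 2: "(1 - A * \<xi>^2) ^ n \<le> exp (- A * \<xi>^2) ^ n"
        using True exp_ge_add_one_self[of "- A * \<xi>^2"] by (intro power_mono) auto
      have 3: "exp (- A * \<xi>^2) ^ n = exp (- A * (real n * \<xi>^2))"
        by (metis exp_of_nat_mult mult.commute mult.left_commute)
      have sq: "real n powr (-2 * \<alpha>) \<le> \<xi>^2"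
      proof -
        have "(real n powr (-\<alpha>))^2 \<le> \<xi>^2"
          using hx(1) by (intro power_mono) auto
        moreover have "(real n powr (-\<alpha>))^2 = real n powr (-2 * \<alpha>)"
          using npos by (simp add: powr_powr[symmetric] power2_eq_square powr_add[symmetric])
        ultimately show ?thesis by simp
      qed
      have 4: "real n powr a \<le> real n * \<xi>^2"
      proof -
        have "real n powr a = real n * real n powr (-2 * \<alpha>)"
        proof -
          have "real n powr a = real n powr (1 + (-2 * \<alpha>))" unfolding a_def by simp
          also have "\<dots> = real n powr 1 * real n powr (-2 * \<alpha>)" by (rule powr_add)
          finally show ?thesis using npos by simp
        qed
        also have "\<dots> \<le> real n * \<xi>^2" using sq npos by simp
        finally show ?thesis .
      qed
      have 5: "exp (- A * (real n * \<xi>^2)) \<le> exp (- A * real n powr a)"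
        using 4 assms(1) by simp
      have "v n m \<xi> \<le> 4 * (1 - A * \<xi>^2) ^ n * v 0 m \<xi>" by (rule 1)
      also have "\<dots> \<le> 4 * exp (- A * real n powr a) * (real n powr p * B')"
      proof -
        have "(1 - A * \<xi>^2) ^ n \<le> exp (- A * real n powr a)" using 2 3 5 by linarith
        moreover have "0 \<le> (1 - A * \<xi>^2) ^ n" using True by simp
        ultimately show ?thesis using v0 v_nonneg[OF hxi, of 0 m]
          by (intro mult_left_mono[of _ _ 4, simplified] mult_mono) auto
      qed
      also have "\<dots> = 4 * B' * exp (- A * real n powr a) * real n powr p" by simp
      finally show ?thesis .
    next
      case False
      obtain k where k: "n = k + 1" using n1 by (metis add.commute le_Suc_ex)
      have "v n m \<xi> \<le> 4 * (1 - A * \<xi>^2) * v k m \<xi>"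
        using h2[OF hxi, where n=k and m=m and k=1] k by simp
      also have "\<dots> \<le> 0"
        using False v_nonneg[OF hxi, of k m]
        by (simp add: mult_nonpos_nonneg)
      finally show ?thesis using rhs_nn by linarith
    qed
  qed
  show ?thesis
    unfolding decays_rapidly_def
  proof (intro allI impI)
    fix l :: nat assume "l \<ge> 1"
    obtain N :: nat where N: "(p + real l) / a < real N" using reals_Archimedean2 by blast
    have Na: "p + real l \<le> real N * a" using N a_pos by (simp add: divide_less_eq)
    define C where "C = 4 * B' * fact N / A ^ N"
    have C_nn: "C \<ge> 0" using B'_nn assms(1) unfolding C_def by simp
    show "\<exists>C. \<forall>n\<ge>1. \<bar>sup0 {v n m \<xi> | m \<xi>.
            real n powr (- \<alpha>) < \<xi> \<and> \<xi> \<le> \<xi>0 \<and> real m < c * ln (real n)}\<bar>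
            \<le> C * real n powr (- real l)"
    proof (intro exI allI impI)
      fix n :: nat assume n1: "n \<ge> 1"
      have npos: "real n > 0" using n1 by simp
      define S where "S = {v n m \<xi> | m \<xi>.
            real n powr (- \<alpha>) < \<xi> \<and> \<xi> \<le> \<xi>0 \<and> real m < c * ln (real n)}"
      define E where "E = 4 * B' * exp (- A * real n powr a) * real n powr p"
      have upper: "\<And>x. x \<in> S \<Longrightarrow> x \<le> E" unfolding S_def E_def using key n1 by blast
      have lower: "\<And>x. x \<in> S \<Longrightarrow> 0 \<le> x" unfolding S_def
      proof -
        fix x assume "x \<in> {v n m \<xi> | m \<xi>.
            real n powr (- \<alpha>) < \<xi> \<and> \<xi> \<le> \<xi>0 \<and> real m < c * ln (real n)}"
        then obtain m \<xi> where x: "x = v n m \<xi>" "real n powr (- \<alpha>) < \<xi>" "\<xi> \<le> \<xi>0" by blast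
        have "0 < real n powr (-\<alpha>)" using npos by simp
        then have "\<xi> > 0" using x(2) by linarith
        then show "0 \<le> x" using x v_nonneg by simp
      qed
      have E_nn: "0 \<le> E" unfolding E_def using B'_nn by simp
      have absS: "\<bar>sup0 S\<bar> \<le> E"
      proof (cases "S = {}")
        case True then show ?thesis using E_nn by (simp add: sup0_def)
      next
        case False
        then obtain x where x: "x \<in> S" by blast
        have bdd: "bdd_above S" using upper by (auto simp: bdd_above_def)
        have "0 \<le> Sup S" using lower[OF x] cSup_upper[OF x bdd] by linarith
        moreover have "Sup S \<le> E" using False upper by (intro cSup_least) auto
        ultimately show ?thesis using False by (simp add: sup0_def)
      qed
      define y where "y = real n powr a"
      have ypos: "y > 0" using npos unfolding y_def by simp
      have ex: "exp (- A * y) \<le> fact N / (A * y) ^ N"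
      proof -
        have "(A * y) ^ N / fact N \<le> exp (A * y)"
          using ypos assms(1) by (intro exp_ge_pow_fact) simp
        moreover have "(A * y) ^ N > 0" using ypos assms(1) by simp
        ultimately have "1 / exp (A * y) \<le> 1 / ((A * y) ^ N / fact N)"
          by (intro divide_left_mono) auto
        then show ?thesis by (simp add: exp_minus inverse_eq_divide)
      qed
      have yN: "y ^ N = real n powr (real N * a)"
        unfolding y_def using npos by (simp add: powr_realpow[symmetric] powr_powr mult.commute)
      have pw: "real n powr p / real n powr (real N * a) \<le> real n powr (- real l)"
      proof -
        have "real n powr p / real n powr (real N * a) = real n powr (p - real N * a)"
          by (simp add: powr_diff)
        also have "\<dots> \<le> real n powr (- real l)"
          using n1 Na by (intro powr_mono) auto
        finally show ?thesis .
      qed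
      have "E \<le> 4 * B' * (fact N / (A * y) ^ N) * real n powr p"
        unfolding E_def y_def[symmetric] using ex B'_nn
        by (intro mult_right_mono mult_left_mono) auto
      also have "\<dots> = C * (real n powr p / real n powr (real N * a))"
        unfolding C_def yN[symmetric] by (simp add: power_mult_distrib)
      also have "\<dots> \<le> C * real n powr (- real l)"
        using pw C_nn by (rule mult_left_mono)
      finally show "\<bar>sup0 {v n m \<xi> | m \<xi>.
            real n powr (- \<alpha>) < \<xi> \<and> \<xi> \<le> \<xi>0 \<and> real m < c * ln (real n)}\<bar>
            \<le> C * real n powr (- real l)" using absS unfolding S_def by linarith
    qed
  qed
qed

end
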